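(* Let $G$ be an $(N,k)$ Adinkra with associated code $C$, with the matrices $\gamma_1,\dots,\gamma_N$ defined as in the context, and let $M=\gamma_{i_1}\gamma_{i_2}\cdots\gamma_{i_t}$ for some $i_1,\dots,i_t\in\{1,\dots,N\}$. Then, for a vertex $x$, the diagonal entry $M_{x,x}$ is non-zero if and only if the walk starting at $x$ and successively following edges of colors $i_1,i_2,\dots,i_t$ is closed (returns to $x$). This happens in one of two ways: (i) trivially, when each edge color occurs an even number of times in $(i_1,\dots,i_t)$, or (ii) when the vector $w\in\mathbb{Z}_2^N$ with $w_i=1$ exactly for the colors occurring an odd number of times in $(i_1,\dots,i_t)$ is a (nonzero) codeword of $C$.
   Context: An Adinkra of dimension $N$ is a finite connected simple graph $G=(V,E)$ with: a bipartition of $V$ into bosons and fermions (every edge joins a boson and a fermion); a height function (irrelevant here); a coloring of $E$ by colors $\{1,\dots,N\}$ such that each vertex is incident to exactly one edge of each color; an edge parity $\pi:E\to\mathbb{Z}_2$ (parity $1$ = dashed); such that every path with edge colors $(i,j)$, $i\ne j$, lies in a unique 4-cycle with colors $(i,j,i,j)$, each having an odd number of dashed edges. If $|V|=2^{N-k}$, $G$ is an $(N,k)$ Adinkra; it has $n=2^{N-k-1}$ bosons $b_1,\dots,b_n$ and $n$ fermions $f_1,\dots,f_n$. A doubly even $(N,k)$ code is a $k$-dimensional subspace of $\mathbb{Z}_2^N$ all of whose elements have weight $\equiv0\pmod4$; $G$ is obtained (up to switching and relabeling) from an $N$-cube Adinkra with vertex labels $\mathbb{Z}_2^N$ (color-$i$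 edges joining $v,v+e_i$) by identifying vertices whose labels differ by elements of a doubly even $(N,k)$ code $C$, its associated code. For each color $i$, $L_i$ is the $n\times n$ matrix with $(L_i)_{r,s}=+1$ if $b_r,f_s$ are joined by a solid edge of color $i$, $-1$ if joined by a dashed edge of color $i$, and $0$ otherwise. $\gamma_i$ is the $2n\times 2n$ real symmetric matrix $\begin{pmatrix}0&L_i\\ L_i^{T}&0\end{pmatrix}$, with rows and columns indexed by $V$ (bosons first, then fermions). *)

theory Defs
  imports Complex_Main
begin

text \<open>The colouring is col, the parity is dashed (True = dashed = parity 1),
  the bipartition is given by the predicate boson (fermions = V minus bosons).
  Vectors of Z_2^N are identified with subsets of the colour set {1..N}
  (addition = symmetric difference, weight = cardinality).\<close>

definition sym_diff :: "'a set \<Rightarrow> 'a set \<Rightarrow> 'a set" where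
  "sym_diff A B = (A - B) \<union> (B - A)"

definition simple_graph :: "'v set \<Rightarrow> 'v set set \<Rightarrow> bool" where
  "simple_graph V E \<longleftrightarrow> finite V \<and>
     (\<forall>e\<in>E. \<exists>u w. u \<in> V \<and> w \<in> V \<and> u \<noteq> w \<and> e = {u, w})"

definition connected_graph :: "'v set \<Rightarrow> 'v set set \<Rightarrow> bool" where
  "connected_graph V E \<longleftrightarrow> V \<noteq> {} \<and>
     (\<forall>u\<in>V. \<forall>w\<in>V. (\<lambda>a b. {a, b} \<in> E)\<^sup>*\<^sup>* u w)"

definition adinkra ::
  "nat \<Rightarrow> 'v set \<Rightarrow> 'v set set \<Rightarrow> ('v set \<Rightarrow> nat) \<Rightarrow> ('v \<Rightarrow> bool) \<Rightarrow> ('v set \<Rightarrow> bool) \<Rightarrow> bool"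
  where
  "adinkra N V E col boson dashed \<longleftrightarrow>
     simple_graph V E \<and> connected_graph V E \<and>
     (\<forall>u w. {u, w} \<in> E \<longrightarrow> (boson u \<longleftrightarrow> \<not> boson w)) \<and>
     (\<forall>e\<in>E. col e \<in> {1..N}) \<and>
     (\<forall>v\<in>V. \<forall>i\<in>{1..N}. \<exists>!e. e \<in> E \<and> v \<in> e \<and> col e = i) \<and>
     (\<forall>v0 v1 v2 i j. i \<noteq> j \<and> {v0, v1} \<in> E \<and> col {v0, v1} = i \<and>
          {v1, v2} \<in> E \<and> col {v1, v2} = j \<longrightarrow>
        (\<exists>!v3. {v2, v3} \<in> E \<and> col {v2, v3} = i \<and> {v3, v0} \<in> E \<and> col {v3, v0} = j \<and>
               odd (length (filter dashed [{v0, v1}, {v1, v2}, {v2, v3}, {v3, v0}]))))"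

definition doubly_even_code :: "nat \<Rightarrow> nat \<Rightarrow> nat set set \<Rightarrow> bool" where
  "doubly_even_code N k C \<longleftrightarrow>
     C \<subseteq> Pow {1..N} \<and> {} \<in> C \<and> (\<forall>a\<in>C. \<forall>b\<in>C. sym_diff a b \<in> C) \<and>
     card C = 2 ^ k \<and> (\<forall>c\<in>C. 4 dvd card c)"

text \<open>C is an associated code of G: G is (up to switching and relabelling) the
  quotient of the N-cube (vertex labels = subsets of {1..N}, colour-i edges joining
  a and a + e_i) by C.  The quotient map is q; switching only changes the parity,
  so it does not enter here.\<close>
definition associated_code ::
  "nat \<Rightarrow> nat \<Rightarrow> 'v set \<Rightarrow> 'v set set \<Rightarrow> ('v set \<Rightarrow> nat) \<Rightarrow> nat set set \<Rightarrow> bool" where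
  "associated_code N k V E col C \<longleftrightarrow> doubly_even_code N k C \<and>
     (\<exists>q :: nat set \<Rightarrow> 'v.
        q ` Pow {1..N} = V \<and>
        (\<forall>a\<in>Pow {1..N}. \<forall>b\<in>Pow {1..N}. q a = q b \<longleftrightarrow> sym_diff a b \<in> C) \<and>
        E = {{q a, q (sym_diff a {i})} | a i. a \<subseteq> {1..N} \<and> i \<in> {1..N}} \<and>
        (\<forall>a\<in>Pow {1..N}. \<forall>i\<in>{1..N}. col {q a, q (sym_diff a {i})} = i))"

text \<open>L_i as a function of (boson, fermion) and gamma_i indexed by V with the
  block structure [[0, L_i], [L_i^T, 0]].\<close>
definition Lmat :: "'v set set \<Rightarrow> ('v set \<Rightarrow> nat) \<Rightarrow> ('v set \<Rightarrow> bool) \<Rightarrow> nat \<Rightarrow> 'v \<Rightarrow> 'v \<Rightarrow> real" where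
  "Lmat E col dashed i b f =
     (if {b, f} \<in> E \<and> col {b, f} = i then (if dashed {b, f} then -1 else 1) else 0)"

definition gamma ::
  "'v set set \<Rightarrow> ('v set \<Rightarrow> nat) \<Rightarrow> ('v \<Rightarrow> bool) \<Rightarrow> ('v set \<Rightarrow> bool) \<Rightarrow> nat \<Rightarrow> 'v \<Rightarrow> 'v \<Rightarrow> real" where
  "gamma E col boson dashed i x y =
     (if boson x \<and> \<not> boson y then Lmat E col dashed i x y
      else if \<not> boson x \<and> boson y then Lmat E col dashed i y x
      else 0)"

definition matmul :: "'v set \<Rightarrow> ('v \<Rightarrow> 'v \<Rightarrow> real) \<Rightarrow> ('v \<Rightarrow> 'v \<Rightarrow> real) \<Rightarrow> 'v \<Rightarrow> 'v \<Rightarrow> real" where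
  "matmul V A B x y = (\<Sum>z\<in>V. A x z * B z y)"

fun gamma_prod ::
  "'v set \<Rightarrow> 'v set set \<Rightarrow> ('v set \<Rightarrow> nat) \<Rightarrow> ('v \<Rightarrow> bool) \<Rightarrow> ('v set \<Rightarrow> bool) \<Rightarrow> nat list \<Rightarrow> 'v \<Rightarrow> 'v \<Rightarrow> real"
  where
  "gamma_prod V E col boson dashed [] = (\<lambda>x y. if x = y then 1 else 0)"
| "gamma_prod V E col boson dashed (i # is) =
     matmul V (gamma E col boson dashed i) (gamma_prod V E col boson dashed is)"

definition nbr :: "'v set set \<Rightarrow> ('v set \<Rightarrow> nat) \<Rightarrow> 'v \<Rightarrow> nat \<Rightarrow> 'v" where
  "nbr E col v i = (THE u. {v, u} \<in> E \<and> col {v, u} = i)"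

fun walk_end :: "'v set set \<Rightarrow> ('v set \<Rightarrow> nat) \<Rightarrow> 'v \<Rightarrow> nat list \<Rightarrow> 'v" where
  "walk_end E col x [] = x"
| "walk_end E col x (i # is) = walk_end E col (nbr E col x i) is"

definition odd_colours :: "nat list \<Rightarrow> nat set" where
  "odd_colours is = {i. odd (count_list is i)}"

end

theory Submission
  imports Defs
begin

lemma adinkra_bip: "adinkra N V E col boson dashed \<Longrightarrow> {u,w} \<in> E \<Longrightarrow> (boson u \<longleftrightarrow> \<not> boson w)"
  unfolding adinkra_def by (elim conjE) blast
lemma adinkra_fin: "adinkra N V E col boson dashed \<Longrightarrow> finite V"
  unfolding adinkra_def simple_graph_def by (elim conjE) assumption

lemma nbr_props:
  assumes A: "adinkra N V E col boson dashed" and v: "v \<in> V" and i: "i \<in> {1..N}"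
  shows "{v, nbr E col v i} \<in> E \<and> col {v, nbr E col v i} = i"
    and "\<And>u. {v, u} \<in> E \<Longrightarrow> col {v, u} = i \<Longrightarrow> u = nbr E col v i"
    and "nbr E col v i \<in> V"
proof -
  have sg: "simple_graph V E" and ex1: "\<exists>!e. e \<in> E \<and> v \<in> e \<and> col e = i"
    using A v i unfolding adinkra_def by auto
  have uniq: "u = u'" if "{v,u} \<in> E" "col {v,u} = i" "{v,u'} \<in> E" "col {v,u'} = i" for u u'
  proof -
    have "{v,u} = {v,u'}" using ex1 that by blast
    moreover have "u \<noteq> v" using sg that(1) unfolding simple_graph_def
      by (metis doubleton_eq_iff insert_absorb2)
    moreover have "u' \<noteq> v" using sg that(3) unfolding simple_graph_def
      by (metis doubleton_eq_iff insert_absorb2)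
    ultimately show ?thesis by (metis doubleton_eq_iff)
  qed
  obtain e where e: "e \<in> E" "v \<in> e" "col e = i" using ex1 by blast
  obtain a b where ab: "a \<in> V" "b \<in> V" "a \<noteq> b" "e = {a,b}" using sg e unfolding simple_graph_def by blast
  obtain u where u: "{v,u} \<in> E" "col {v,u} = i" "u \<in> V"
    using e ab by (metis insert_commute insertE singletonD)
  have ex: "\<exists>!u. {v, u} \<in> E \<and> col {v, u} = i" using u uniq by blast
  show 1: "{v, nbr E col v i} \<in> E \<and> col {v, nbr E col v i} = i"
    unfolding nbr_def using theI'[OF ex] .
  show "\<And>u. {v, u} \<in> E \<Longrightarrow> col {v, u} = i \<Longrightarrow> u = nbr E col v i" using 1 uniq by blast
  show "nbr E col v i \<in> V" using 1 u uniq by metis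
qed

lemma gamma_eq:
  assumes A: "adinkra N V E col boson dashed" and v: "x \<in> V" and i: "i \<in> {1..N}"
  shows "\<exists>s. (s = 1 \<or> s = -1) \<and> (\<forall>y. gamma E col boson dashed i x y =
            (if y = nbr E col x i then s else 0))"
proof -
  let ?n = "nbr E col x i"
  have n: "{x, ?n} \<in> E" "col {x, ?n} = i" using nbr_props(1)[OF A v i] by auto
  have bip: "boson x \<longleftrightarrow> \<not> boson ?n" using adinkra_bip[OF A n(1)] .
  have Lsym: "Lmat E col dashed i a b = Lmat E col dashed i b a" for a b
    unfolding Lmat_def by (simp add: insert_commute)
  define s where "s = gamma E col boson dashed i x ?n"
  have L1: "Lmat E col dashed i x ?n = 1 \<or> Lmat E col dashed i x ?n = -1"
    unfolding Lmat_def using n by simp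
  have s: "s = 1 \<or> s = -1"
  proof (cases "boson x")
    case True then show ?thesis unfolding s_def gamma_def using bip L1 by simp
  next
    case False then show ?thesis unfolding s_def gamma_def using bip L1 Lsym by simp
  qed
  have "gamma E col boson dashed i x y = 0" if "y \<noteq> ?n" for y
  proof -
    have "\<not> ({x,y} \<in> E \<and> col {x,y} = i)" using nbr_props(2)[OF A v i] that by blast
    then have "Lmat E col dashed i x y = 0" unfolding Lmat_def by simp
    then show ?thesis unfolding gamma_def using Lsym[of x y] by simp
  qed
  then have "\<forall>y. gamma E col boson dashed i x y = (if y = ?n then s else 0)"
    by (auto simp: s_def)
  then show ?thesis using s by blast
qed

lemma gamma_prod_eq:
  assumes A: "adinkra N V E col boson dashed"
  shows "x \<in> V \<Longrightarrow> set is \<subseteq> {1..N} \<Longrightarrow> walk_end E col x is \<in> V \<and>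
    (\<exists>s. (s = 1 \<or> s = -1) \<and> (\<forall>y. gamma_prod V E col boson dashed is x y =
            (if y = walk_end E col x is then s else 0)))"
proof (induction "is" arbitrary: x)
  case Nil
  then show ?case by (intro conjI exI[of _ 1]) auto
next
  case (Cons i "is")
  have i: "i \<in> {1..N}" using Cons by auto
  let ?n = "nbr E col x i"
  have nV: "?n \<in> V" using nbr_props(3)[OF A Cons(2) i] .
  obtain s where s: "s = 1 \<or> s = -1" "\<forall>y. gamma E col boson dashed i x y = (if y = ?n then s else 0)"
    using gamma_eq[OF A Cons(2) i] by blast
  from Cons(1)[OF nV] Cons(3) obtain t where t: "walk_end E col ?n is \<in> V" "t = 1 \<or> t = -1"
    "\<forall>y. gamma_prod V E col boson dashed is ?n y = (if y = walk_end E col ?n is then t else 0)" by auto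
  have fin: "finite V" using adinkra_fin[OF A] .
  have "gamma_prod V E col boson dashed (i # is) x y =
        s * gamma_prod V E col boson dashed is ?n y" for y
  proof -
    have "gamma_prod V E col boson dashed (i # is) x y =
      (\<Sum>z\<in>V. (if z = ?n then s * gamma_prod V E col boson dashed is z y else 0))"
      unfolding gamma_prod.simps matmul_def using s(2) by (intro sum.cong) auto
    also have "\<dots> = s * gamma_prod V E col boson dashed is ?n y"
      using fin nV by (simp add: sum.delta')
    finally show ?thesis .
  qed
  then show ?case using s t
    by (intro conjI exI[of _ "s*t"]) auto
qed

lemma odd_colours_Cons: "odd_colours (i # is) = sym_diff {i} (odd_colours is)"
  unfolding odd_colours_def sym_diff_def by auto

lemma walk_q:
  assumes A: "adinkra N V E col boson dashed"
    and qV: "q ` Pow {1..N} = V"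
    and qE: "E = {{q a, q (sym_diff a {i})} | a i. a \<subseteq> {1..N} \<and> i \<in> {1..N}}"
    and qc: "\<forall>a\<in>Pow {1..N}. \<forall>i\<in>{1..N}. col {q a, q (sym_diff a {i})} = i"
  shows "a \<subseteq> {1..N} \<Longrightarrow> set is \<subseteq> {1..N} \<Longrightarrow>
     walk_end E col (q a) is = q (sym_diff a (odd_colours is))"
proof (induction "is" arbitrary: a)
  case Nil
  then show ?case by (simp add: odd_colours_def sym_diff_def)
next
  case (Cons i "is")
  have i: "i \<in> {1..N}" using Cons by auto
  have qa: "q a \<in> V" using qV Cons(2) by auto
  have "{q a, q (sym_diff a {i})} \<in> E" using qE Cons(2) i by blast
  moreover have "col {q a, q (sym_diff a {i})} = i" using qc Cons(2) i by auto
  ultimately have nb: "nbr E col (q a) i = q (sym_diff a {i})"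
    using nbr_props(2)[OF A qa i] by metis
  have sub: "sym_diff a {i} \<subseteq> {1..N}" using Cons(2) i unfolding sym_diff_def by auto
  have "walk_end E col (q a) (i # is) = q (sym_diff (sym_diff a {i}) (odd_colours is))"
    using nb Cons(1)[OF sub] Cons(3) by simp
  also have "sym_diff (sym_diff a {i}) (odd_colours is) = sym_diff a (odd_colours (i # is))"
    unfolding odd_colours_Cons sym_diff_def by blast
  finally show ?case .
qed

theorem mainTheorem11:
  fixes N k :: nat and V :: "'v set" and E :: "'v set set"
    and col :: "'v set \<Rightarrow> nat" and boson :: "'v \<Rightarrow> bool" and dashed :: "'v set \<Rightarrow> bool"
    and C :: "nat set set" and "is" :: "nat list" and x :: 'v
  assumes "adinkra N V E col boson dashed"
    and "card V = 2 ^ (N - k)"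
    and "associated_code N k V E col C"
    and "set is \<subseteq> {1..N}"
    and "x \<in> V"
  shows "(gamma_prod V E col boson dashed is x x \<noteq> 0 \<longleftrightarrow> walk_end E col x is = x) \<and>
         (walk_end E col x is = x \<longleftrightarrow>
            (\<forall>i\<in>{1..N}. even (count_list is i)) \<or>
            (odd_colours is \<noteq> {} \<and> odd_colours is \<in> C))"
proof
  obtain s where s: "s = 1 \<or> s = -1" "\<forall>y. gamma_prod V E col boson dashed is x y =
            (if y = walk_end E col x is then s else 0)"
    using gamma_prod_eq[OF assms(1) assms(5) assms(4)] by blast
  show "gamma_prod V E col boson dashed is x x \<noteq> 0 \<longleftrightarrow> walk_end E col x is = x"
    using s by auto
next
  obtain q where qV: "q ` Pow {1..N} = V"
    and qeq: "\<forall>a\<in>Pow {1..N}. \<forall>b\<in>Pow {1..N}. q a = q b \<longleftrightarrow> sym_diff a b \<in> C"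
    and qE: "E = {{q a, q (sym_diff a {i})} | a i. a \<subseteq> {1..N} \<and> i \<in> {1..N}}"
    and qc: "\<forall>a\<in>Pow {1..N}. \<forall>i\<in>{1..N}. col {q a, q (sym_diff a {i})} = i"
    and code: "doubly_even_code N k C"
    using assms(3) unfolding associated_code_def by blast
  obtain a where a: "a \<subseteq> {1..N}" "x = q a" using qV assms(5) by blast
  let ?O = "odd_colours is"
  have Osub: "?O \<subseteq> {1..N}"
  proof
    fix j assume "j \<in> ?O"
    then have "count_list is j \<noteq> 0" unfolding odd_colours_def by (metis mem_Collect_eq odd_pos neq0_conv)
    then have "j \<in> set is" by (metis count_list_0_iff)
    then show "j \<in> {1..N}" using assms(4) by auto
  qed
  have w: "walk_end E col x is = q (sym_diff a ?O)"
    using walk_q[OF assms(1) qV qE qc a(1) assms(4)] a(2) by simp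
  have sub2: "sym_diff a ?O \<subseteq> {1..N}" using a(1) Osub unfolding sym_diff_def by auto
  have "sym_diff (sym_diff a ?O) a = ?O" unfolding sym_diff_def by blast
  then have "walk_end E col x is = x \<longleftrightarrow> ?O \<in> C"
    using w a qeq sub2 by auto
  moreover have "(\<forall>i\<in>{1..N}. even (count_list is i)) \<longleftrightarrow> ?O = {}"
    using Osub unfolding odd_colours_def by auto
  moreover have "{} \<in> C" using code unfolding doubly_even_code_def by blast
  ultimately show "walk_end E col x is = x \<longleftrightarrow>
            (\<forall>i\<in>{1..N}. even (count_list is i)) \<or>
            (odd_colours is \<noteq> {} \<and> odd_colours is \<in> C)" by auto
qed

end
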